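(* Let $B=F(b_1,\ldots,b_n)$ be a Ferrers board with $0\le b_1\le\cdots\le b_n$ and $b_n>0$, and let $B^-=F(b_1,\ldots,b_{n-1})$. Then for all $1\le k\le n$, $$\mathbf{rPT}_k(B,p,q,r)=\mathbf{rPT}_k(B^-,p,q,r)+P_{b_{n-(k-1)}}(p,q,r)\,\mathbf{rPT}_{k-1}(B^-,p,q,r).$$
   Context: For $m\ge1$, a $P$-tiling of height $m$ is a tiling of a column of height $m$ by tiles of heights 1, 2 and 3 whose bottom-most tile has height 1. $P_m(p,q,r)=\sum_T q^{\mathrm{one}(T)}p^{\mathrm{two}(T)}r^{\mathrm{three}(T)}$ over all $P$-tilings $T$ of height $m$, where $\mathrm{one},\mathrm{two},\mathrm{three}$ count tiles of height 1, 2, 3. There are no $P$-tilings of height 0 and $P_0(p,q,r)=0$. A Ferrers board $F(b_1,\ldots,b_n)$ has column heights $b_1,\ldots,b_n$ from left to right. A $P$-rook placement of $k$ tilings in $B=F(b_1,\ldots,b_n)$ is a choice of columns $1\le i_1<\cdots<i_k\le n$ with, for each $s=1,\ldots,k$, a $P$-tiling of height $b_{i_s-(s-1)}$ in column $i_s$ (the number of cells of column $i_s$ left uncanceled by the tilings in earlier columns, each tiling canceling top cells of columns to its right so that after $s$ tilings the untiled columns have $b_1,\ldots,b_{n-s}$ uncanceled cells). Its weight is $q^ap^br^c$ with $a,b,c$ the total numbers of tiles of height 1, 2, 3 used. $\mathbf{rPT}_k(B,p,q,r)$ is the sum of the weights of all $P$-rook placements of $k$ tilings in $B$ (the empty placement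 has weight 1; the sum is 0 if there are none). *)

theory Defs
  imports Main
begin

text \<open>A tiling of a column is the list of tile heights listed from bottom to top.
  A P-tiling of height m: all tiles of height 1, 2 or 3, total height m, bottom-most tile has height 1.\<close>
definition is_Ptiling :: "nat \<Rightarrow> nat list \<Rightarrow> bool" where
  "is_Ptiling m T \<longleftrightarrow> set T \<subseteq> {1,2,3} \<and> sum_list T = m \<and> T \<noteq> [] \<and> hd T = 1"

definition tiling_weight :: "'a::comm_semiring_1 \<Rightarrow> 'a \<Rightarrow> 'a \<Rightarrow> nat list \<Rightarrow> 'a" where
  "tiling_weight p q r T = q ^ count_list T 1 * p ^ count_list T 2 * r ^ count_list T 3"

definition Ptil :: "nat \<Rightarrow> 'a::comm_semiring_1 \<Rightarrow> 'a \<Rightarrow> 'a \<Rightarrow> 'a" where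
  "Ptil m p q r = (\<Sum>T\<in>{T. is_Ptiling m T}. tiling_weight p q r T)"

text \<open>Board F(b_1,...,b_n) given as the list bs = [b_1,...,b_n]; column j (1-based) has height bs!(j-1).
  A P-rook placement of k tilings is a list of pairs (i_s, T_s), s = 1..k, with columns
  1 \<le> i_1 < ... < i_k \<le> n and T_s a P-tiling of height b_{i_s-(s-1)}.
  (0-based list index s0 = s-1, so the height is b_{i - s0} = bs!(i - s0 - 1).)\<close>
definition Prook_placements :: "nat \<Rightarrow> nat list \<Rightarrow> (nat \<times> nat list) list set" where
  "Prook_placements k bs = {pl. length pl = k \<and> sorted_wrt (<) (map fst pl) \<and>
     (\<forall>s<k. 1 \<le> fst (pl!s) \<and> fst (pl!s) \<le> length bs \<and>
        is_Ptiling (bs ! (fst (pl!s) - s - 1)) (snd (pl!s)))}"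

definition placement_weight :: "'a::comm_semiring_1 \<Rightarrow> 'a \<Rightarrow> 'a \<Rightarrow> (nat \<times> nat list) list \<Rightarrow> 'a" where
  "placement_weight p q r pl = tiling_weight p q r (concat (map snd pl))"

definition rPT :: "nat \<Rightarrow> nat list \<Rightarrow> 'a::comm_semiring_1 \<Rightarrow> 'a \<Rightarrow> 'a \<Rightarrow> 'a" where
  "rPT k bs p q r = (\<Sum>pl\<in>Prook_placements k bs. placement_weight p q r pl)"

end

theory Submission
  imports Defs
begin

lemma tw_append: "tiling_weight p q r (A @ B) = tiling_weight p q r A * tiling_weight p q r B"
  by (simp add: tiling_weight_def power_add algebra_simps)

lemma fin_til: "finite {T. is_Ptiling m T}"
proof -
  have "{T. is_Ptiling m T} \<subseteq> {T. set T \<subseteq> {1,2,3::nat} \<and> length T \<le> m}"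
  proof
    fix T assume "T \<in> {T. is_Ptiling m T}"
    then have a: "set T \<subseteq> {1,2,3}" "sum_list T = m" by (auto simp: is_Ptiling_def)
    have "length T \<le> sum_list T" using a(1)
      by (induction T) auto
    with a show "T \<in> {T. set T \<subseteq> {1,2,3::nat} \<and> length T \<le> m}" by auto
  qed
  moreover have "finite {T. set T \<subseteq> {1,2,3::nat} \<and> length T \<le> m}"
    by (rule finite_lists_length_le) auto
  ultimately show ?thesis by (rule finite_subset)
qed

lemma fin_pl: "finite (Prook_placements k bs)"
proof -
  define A where "A = {1..length bs} \<times> {T. set T \<subseteq> {1,2,3::nat} \<and> length T \<le> sum_list bs}"
  have fA: "finite A" unfolding A_def
    by (intro finite_cartesian_product finite_lists_length_le) auto
  have "Prook_placements k bs \<subseteq> {xs. set xs \<subseteq> A \<and> length xs \<le> k}"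
  proof
    fix pl assume pl: "pl \<in> Prook_placements k bs"
    have "x \<in> A" if "x \<in> set pl" for x
    proof -
      from that obtain s where s: "s < length pl" "x = pl ! s" by (auto simp: in_set_conv_nth)
      with pl have h: "1 \<le> fst x" "fst x \<le> length bs" "is_Ptiling (bs ! (fst x - s - 1)) (snd x)"
        by (auto simp: Prook_placements_def)
      then have a: "set (snd x) \<subseteq> {1,2,3}" "sum_list (snd x) = bs ! (fst x - s - 1)"
        by (auto simp: is_Ptiling_def)
      have "length (snd x) \<le> sum_list (snd x)" using a(1)
        by (induction "snd x" arbitrary: x) auto
      also have "\<dots> \<le> sum_list bs" unfolding a(2)
        by (rule elem_le_sum_list) (use h in auto)
      finally show ?thesis using h a unfolding A_def by (cases x) auto
    qed
    with pl show "pl \<in> {xs. set xs \<subseteq> A \<and> length xs \<le> k}" by (auto simp: Prook_placements_def)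
  qed
  moreover have "finite {xs. set xs \<subseteq> A \<and> length xs \<le> k}"
    by (rule finite_lists_length_le[OF fA])
  ultimately show ?thesis by (rule finite_subset)
qed

lemma le_last:
  fixes pl :: "(nat \<times> 'b) list"
  assumes "sorted_wrt (<) (map fst pl)" "s < length pl"
  shows "fst (pl ! s) \<le> fst (last pl)"
proof -
  have l: "last pl = pl ! (length pl - 1)" using assms(2) by (subst last_conv_nth) auto
  show ?thesis
  proof (cases "s = length pl - 1")
    case True then show ?thesis using l by (metis order_refl)
  next
    case False
    then have "s < length pl - 1" using assms(2) by simp
    then have "map fst pl ! s < map fst pl ! (length pl - 1)"
      using sorted_wrt_nth_less[OF assms(1)] assms(2) by simp
    then show ?thesis using l assms(2) by simp
  qed
qed

theorem theorem7:
  fixes bs :: "nat list" and k :: nat and p q r :: "'a::comm_semiring_1"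
  assumes "sorted bs" and "bs \<noteq> []" and "last bs > 0"
    and "1 \<le> k" and "k \<le> length bs"
  shows "rPT k bs p q r =
           rPT k (butlast bs) p q r
           + Ptil (bs ! (length bs - k)) p q r * rPT (k - 1) (butlast bs) p q r"
proof -
  define n where "n = length bs"
  define bs' where "bs' = butlast bs"
  have lbs': "length bs' = n - 1" by (simp add: bs'_def n_def)
  have nth': "bs' ! j = bs ! j" if "j < n - 1" for j
    using that by (simp add: bs'_def n_def nth_butlast)
  define S where "S = Prook_placements k bs"
  define S1 where "S1 = {pl \<in> S. fst (last pl) < n}"
  define S2 where "S2 = {pl \<in> S. fst (last pl) = n}"
  define TT where "TT = {T. is_Ptiling (bs ! (n - k)) T}"
  define f where "f = (\<lambda>(pl' :: (nat \<times> nat list) list, T :: nat list). pl' @ [(n, T)])"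
  have Sle: "fst (last pl) \<le> n" if "pl \<in> S" for pl
  proof -
    have "length pl = k" "k \<ge> 1" using that assms(4) by (auto simp: S_def Prook_placements_def)
    then have "last pl = pl ! (k-1)" by (subst last_conv_nth) auto
    then show ?thesis using that \<open>k \<ge> 1\<close> by (auto simp: S_def Prook_placements_def n_def)
  qed
  have split: "S = S1 \<union> S2" "S1 \<inter> S2 = {}"
    using Sle unfolding S1_def S2_def by (auto simp: le_less)
  have S1eq: "S1 = Prook_placements k bs'"
  proof (intro set_eqI iffI)
    fix pl assume "pl \<in> S1"
    then have pl: "pl \<in> S" "fst (last pl) < n" by (auto simp: S1_def)
    then have d: "length pl = k" "sorted_wrt (<) (map fst pl)"
      "\<And>s. s<k \<Longrightarrow> 1 \<le> fst (pl!s) \<and> fst (pl!s) \<le> n \<and> is_Ptiling (bs ! (fst (pl!s) - s - 1)) (snd (pl!s))"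
      by (auto simp: S_def Prook_placements_def n_def)
    show "pl \<in> Prook_placements k bs'" unfolding Prook_placements_def
    proof (intro CollectI conjI allI impI)
      fix s assume s: "s < k"
      have "fst (pl!s) \<le> fst (last pl)" using le_last[OF d(2)] s d(1) by simp
      with pl d(3)[OF s] show "1 \<le> fst (pl!s)" "fst (pl!s) \<le> length bs'"
        "is_Ptiling (bs' ! (fst (pl!s) - s - 1)) (snd (pl!s))"
        using lbs' nth'[of "fst (pl!s) - s - 1"] by auto
    qed (use d in auto)
  next
    fix pl assume pl: "pl \<in> Prook_placements k bs'"
    then have d: "length pl = k" "sorted_wrt (<) (map fst pl)"
      "\<And>s. s<k \<Longrightarrow> 1 \<le> fst (pl!s) \<and> fst (pl!s) \<le> n - 1 \<and> is_Ptiling (bs' ! (fst (pl!s) - s - 1)) (snd (pl!s))"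
      by (auto simp: Prook_placements_def lbs')
    have "n \<ge> 1" using assms(2) by (cases bs) (auto simp: n_def)
    have inS: "pl \<in> S" unfolding S_def Prook_placements_def
    proof (intro CollectI conjI allI impI)
      fix s assume s: "s < k"
      from d(3)[OF s] show "1 \<le> fst (pl!s)" "fst (pl!s) \<le> length bs"
        "is_Ptiling (bs ! (fst (pl!s) - s - 1)) (snd (pl!s))"
        using nth'[of "fst (pl!s) - s - 1"] by (auto simp: n_def)
    qed (use d in auto)
    have "last pl = pl ! (k-1)" using d(1) assms(4) by (subst last_conv_nth) auto
    then have "fst (last pl) < n" using d(3)[of "k-1"] assms(4) \<open>n \<ge> 1\<close> by auto
    with inS show "pl \<in> S1" by (simp add: S1_def)
  qed
  have S2eq: "S2 = f ` (Prook_placements (k-1) bs' \<times> TT)"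
  proof (intro set_eqI iffI)
    fix pl assume "pl \<in> S2"
    then have pl: "pl \<in> S" "fst (last pl) = n" by (auto simp: S2_def)
    then have d: "length pl = k" "sorted_wrt (<) (map fst pl)"
      "\<And>s. s<k \<Longrightarrow> 1 \<le> fst (pl!s) \<and> fst (pl!s) \<le> n \<and> is_Ptiling (bs ! (fst (pl!s) - s - 1)) (snd (pl!s))"
      by (auto simp: S_def Prook_placements_def n_def)
    have ne: "pl \<noteq> []" using d(1) assms(4) by auto
    have lastk: "last pl = pl ! (k-1)" using d(1) ne by (subst last_conv_nth) auto
    have dec: "pl = butlast pl @ [(n, snd (last pl))]"
      using ne pl(2) by (metis append_butlast_last_id prod.collapse)
    have lt: "fst (pl ! s) < n" if "s < k - 1" for s
    proof -
      have "map fst pl ! s < map fst pl ! (k-1)"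
        using sorted_wrt_nth_less[OF d(2)] that d(1) by simp
      then show ?thesis using that d(1) lastk pl(2) by simp
    qed
    have "butlast pl \<in> Prook_placements (k-1) bs'" unfolding Prook_placements_def
    proof (intro CollectI conjI allI impI)
      show "length (butlast pl) = k - 1" using d(1) by simp
      show "sorted_wrt (<) (map fst (butlast pl))" using d(2)
        by (simp add: map_butlast butlast_conv_take take_map[symmetric])
      fix s assume s: "s < k - 1"
      have e: "butlast pl ! s = pl ! s" using s d(1) by (simp add: nth_butlast)
      have sk: "s < k" using s by simp
      from d(3)[OF sk] s lt[OF s] show "1 \<le> fst (butlast pl!s)" "fst (butlast pl!s) \<le> length bs'"
        "is_Ptiling (bs' ! (fst (butlast pl!s) - s - 1)) (snd (butlast pl!s))"
        unfolding e using lbs' nth'[of "fst (pl!s) - s - 1"] by auto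
    qed
    moreover have "snd (last pl) \<in> TT"
    proof -
      have "n - (k-1) - 1 = n - k" using assms(4) by simp
      then show ?thesis using d(3)[of "k-1"] assms(4) lastk pl(2) unfolding TT_def by auto
    qed
    ultimately show "pl \<in> f ` (Prook_placements (k-1) bs' \<times> TT)"
      unfolding f_def using dec by (intro image_eqI[of _ _ "(butlast pl, snd (last pl))"]) auto
  next
    fix pl assume "pl \<in> f ` (Prook_placements (k-1) bs' \<times> TT)"
    then obtain pl' T where pl: "pl = pl' @ [(n, T)]" "pl' \<in> Prook_placements (k-1) bs'" "T \<in> TT"
      by (auto simp: f_def)
    then have d: "length pl' = k - 1" "sorted_wrt (<) (map fst pl')"
      "\<And>s. s<k-1 \<Longrightarrow> 1 \<le> fst (pl'!s) \<and> fst (pl'!s) \<le> n - 1 \<and> is_Ptiling (bs' ! (fst (pl'!s) - s - 1)) (snd (pl'!s))"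
      by (auto simp: Prook_placements_def lbs')
    have "n \<ge> k" using assms(5) by (simp add: n_def)
    have lt: "x < n" if xin: "x \<in> set (map fst pl')" for x
    proof -
      obtain i where i: "i < k - 1" "x = fst (pl' ! i)" using xin d(1) by (auto simp: in_set_conv_nth)
      show ?thesis using d(3)[OF i(1)] i(2) assms(4) \<open>n \<ge> k\<close> by auto
    qed
    have "pl \<in> S" unfolding S_def Prook_placements_def
    proof (intro CollectI conjI allI impI)
      show "length pl = k" using pl(1) d(1) assms(4) by simp
      show "sorted_wrt (<) (map fst pl)" using pl(1) d(2) lt by (simp add: sorted_wrt_append)
      fix s assume s: "s < k"
      have h: "1 \<le> fst (pl!s) \<and> fst (pl!s) \<le> length bs \<and> is_Ptiling (bs ! (fst (pl!s) - s - 1)) (snd (pl!s))"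
      proof (cases "s < k - 1")
        case True
        then show ?thesis using pl(1) d(1) d(3)[OF True] nth'[of "fst (pl'!s) - s - 1"]
          by (auto simp: nth_append n_def)
      next
        case False
        then have "s = k - 1" using s by simp
        moreover have "n - (k-1) - 1 = n - k" using assms(4) by simp
        ultimately show ?thesis using pl d(1) \<open>n \<ge> k\<close> assms(4)
          by (auto simp: nth_append n_def TT_def)
      qed
      then show "1 \<le> fst (pl!s)" "fst (pl!s) \<le> length bs" "is_Ptiling (bs ! (fst (pl!s) - s - 1)) (snd (pl!s))"
        by auto
    qed
    then show "pl \<in> S2" using pl(1) by (simp add: S2_def)
  qed
  have inj: "inj_on f (Prook_placements (k-1) bs' \<times> TT)"
    unfolding f_def by (rule inj_onI) auto
  have fS: "finite S" by (simp add: S_def fin_pl)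
  have "rPT k bs p q r = (\<Sum>pl\<in>S1. placement_weight p q r pl) + (\<Sum>pl\<in>S2. placement_weight p q r pl)"
    unfolding rPT_def S_def[symmetric] split(1)
    by (rule sum.union_disjoint) (use fS split in auto)
  also have "(\<Sum>pl\<in>S2. placement_weight p q r pl)
      = (\<Sum>x\<in>Prook_placements (k-1) bs' \<times> TT. placement_weight p q r (f x))"
    unfolding S2eq by (rule sum.reindex[OF inj, unfolded comp_def])
  also have "\<dots> = (\<Sum>pl'\<in>Prook_placements (k-1) bs'. \<Sum>T\<in>TT. placement_weight p q r pl' * tiling_weight p q r T)"
    unfolding sum.cartesian_product
    by (rule sum.cong) (auto simp: f_def placement_weight_def tw_append)
  also have "\<dots> = Ptil (bs ! (n - k)) p q r * rPT (k - 1) bs' p q r"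
    unfolding Ptil_def rPT_def TT_def
    by (simp add: sum_distrib_left sum_distrib_right mult.commute sum.swap[of _ "Prook_placements _ _"])
  finally show ?thesis using S1eq by (simp add: rPT_def n_def bs'_def)
qed

end
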